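(* Let $s\in(0,1)$, $N>2s$, $1<p<\frac{N+2s}{N-2s}$, $0<a\in L^\infty(\mathbb R^N)$, $f\in H^{-s}(\mathbb R^N)$, and $C_p:=(p\|a\|_{L^\infty})^{-\frac1{p-1}}\frac{p-1}{p}$. If $\|f\|_{H^{-s}(\mathbb R^N)}<C_pS_1^{\frac{p+1}{2(p-1)}}$, then $$\inf_{u\in H^s(\mathbb R^N),\ \|u\|_{L^{p+1}(\mathbb R^N)}=1}\Big\{C_p\|u\|_{H^s}^{\frac{2p}{p-1}}-\langle f,u\rangle\Big\}>0.$$
   Context: $\|u\|_{H^s}^2=\int_{\mathbb R^N}|u|^2+\iint_{\mathbb R^{2N}}\frac{|u(x)-u(y)|^2}{|x-y|^{N+2s}}dx\,dy$; $\langle\cdot,\cdot\rangle$ is the $H^{-s}$–$H^s$ duality; $S_1:=\inf_{u\in H^s\setminus\{0\}}\frac{\|u\|_{H^s}^2}{(\int|u|^{p+1})^{2/(p+1)}}$. *)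

theory Defs
  imports "HOL-Analysis.Analysis" "HOL-Probability.Essential_Supremum"
begin

text \<open>Functions on R^N are modelled as u :: 'n \<Rightarrow> real with 'n a Euclidean space, N = DIM('n).\<close>

definition L2_sq :: "('n::euclidean_space \<Rightarrow> real) \<Rightarrow> ennreal" where
  "L2_sq u = (\<integral>\<^sup>+ x. ennreal ((u x)\<^sup>2) \<partial>lborel)"

definition gagliardo :: "real \<Rightarrow> ('n::euclidean_space \<Rightarrow> real) \<Rightarrow> ennreal" where
  "gagliardo s u = (\<integral>\<^sup>+ x. (\<integral>\<^sup>+ y. ennreal ((u x - u y)\<^sup>2 / (norm (x - y) powr (real DIM('n) + 2 * s))) \<partial>lborel) \<partial>lborel)"

definition in_Hs :: "real \<Rightarrow> ('n::euclidean_space \<Rightarrow> real) \<Rightarrow> bool" where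
  "in_Hs s u \<longleftrightarrow> u \<in> borel_measurable lborel \<and> L2_sq u < \<infinity> \<and> gagliardo s u < \<infinity>"

definition Hs_norm :: "real \<Rightarrow> ('n::euclidean_space \<Rightarrow> real) \<Rightarrow> real" where
  "Hs_norm s u = sqrt (enn2real (L2_sq u) + enn2real (gagliardo s u))"

definition Lp_norm :: "real \<Rightarrow> ('n::euclidean_space \<Rightarrow> real) \<Rightarrow> real" where
  "Lp_norm q u = (enn2real (\<integral>\<^sup>+ x. ennreal (\<bar>u x\<bar> powr q) \<partial>lborel)) powr (1 / q)"

text \<open>H^{-s}: bounded linear functionals on H^s; duality pairing is application.\<close>
definition in_Hminus :: "real \<Rightarrow> (('n::euclidean_space \<Rightarrow> real) \<Rightarrow> real) \<Rightarrow> bool" where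
  "in_Hminus s f \<longleftrightarrow>
     (\<forall>u v. in_Hs s u \<longrightarrow> in_Hs s v \<longrightarrow> f (\<lambda>x. u x + v x) = f u + f v) \<and>
     (\<forall>c u. in_Hs s u \<longrightarrow> f (\<lambda>x. c * u x) = c * f u) \<and>
     (\<exists>C. \<forall>u. in_Hs s u \<longrightarrow> \<bar>f u\<bar> \<le> C * Hs_norm s u)"

definition Hminus_norm :: "real \<Rightarrow> (('n::euclidean_space \<Rightarrow> real) \<Rightarrow> real) \<Rightarrow> real" where
  "Hminus_norm s f = (SUP u \<in> {u. in_Hs s u \<and> Hs_norm s u \<le> 1}. \<bar>f u\<bar>)"

definition Linf_norm :: "('n::euclidean_space \<Rightarrow> real) \<Rightarrow> real" where
  "Linf_norm a = real_of_ereal (esssup lborel (\<lambda>x. ereal \<bar>a x\<bar>))"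

text \<open>S_1 (it depends on 'n through the type).\<close>
definition S1 :: "real \<Rightarrow> real \<Rightarrow> ('n::euclidean_space) itself \<Rightarrow> real" where
  "S1 s p _ = (INF u \<in> {u :: 'n \<Rightarrow> real. in_Hs s u \<and> Hs_norm s u \<noteq> 0}.
       (Hs_norm s u)\<^sup>2 / (enn2real (\<integral>\<^sup>+ x. ennreal (\<bar>u x\<bar> powr (p + 1)) \<partial>lborel)) powr (2 / (p + 1)))"

end

theory Submission
  imports Defs
begin


lemma pow_powr: "0 < (x::real) \<Longrightarrow> (x^k) powr b = (x powr b)^k"
  by (simp add: powr_realpow[symmetric] powr_powr powr_power mult.commute)

lemma near_int:
  fixes b :: real assumes b0: "0 \<le> b" and bN: "b < real DIM('n)"
  shows "(\<integral>\<^sup>+z. indicator (ball (0::'n::euclidean_space) 1) z * ennreal (norm z powr (-b)) \<partial>lborel) < \<infinity>"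
proof -
  define N where "N = DIM('n)"
  define V where "V = unit_ball_vol (real N)"
  define A where "A k = {z::'n. (1/2)^(Suc k) < norm z \<and> norm z \<le> (1/2::real)^k}" for k
  define c where "c k = (2 powr b) ^ Suc k" for k
  have Am[measurable]: "A k \<in> sets lborel" for k unfolding A_def by measurable
  have Ameas: "emeasure lborel (A k) \<le> ennreal (V * ((1/2)^k)^N)" for k
  proof -
    have "A k \<subseteq> cball 0 ((1/2)^k)" unfolding A_def by auto
    then have "emeasure lborel (A k) \<le> emeasure lborel (cball (0::'n) ((1/2)^k))"
      by (intro emeasure_mono) auto
    also have "\<dots> = ennreal (V * ((1/2)^k)^N)" unfolding V_def N_def by (rule emeasure_cball) simp
    finally show ?thesis .
  qed
  have pw: "indicator (ball (0::'n) 1) z * ennreal (norm z powr (-b)) \<le> (\<Sum>k. ennreal (c k) * indicator (A k) z)" for z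
  proof (cases "z \<noteq> 0 \<and> norm z < 1")
    case False
    then show ?thesis by (auto simp: indicator_def)
  next
    case True
    then have zp: "0 < norm z" and z1: "norm z < 1" by auto
    obtain n where n: "(1/2::real)^n < norm z" using real_arch_pow_inv[OF zp, of "1/2"] by auto
    define m where "m = (LEAST n. (1/2::real)^n < norm z)"
    have m1: "(1/2::real)^m < norm z" unfolding m_def by (rule LeastI[of _ n]) (rule n)
    have m0: "m \<noteq> 0" using m1 z1 by (cases m) auto
    then obtain k where mk: "m = Suc k" by (cases m) auto
    have "\<not> (1/2::real)^k < norm z"
    proof
      assume "(1/2::real)^k < norm z"
      then have "m \<le> k" unfolding m_def by (rule Least_le)
      then show False using mk by simp
    qed
    then have zA: "z \<in> A k" using m1 mk unfolding A_def by auto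
    have "norm z powr (-b) \<le> ((1/2::real)^(Suc k)) powr (-b)"
      using m1 mk b0 by (intro powr_mono2') auto
    also have "\<dots> = c k" unfolding c_def
      by (simp add: powr_minus_divide powr_divide power_divide pow_powr powr_mult)
    finally have le: "norm z powr (-b) \<le> c k" .
    have "indicator (ball (0::'n) 1) z * ennreal (norm z powr (-b)) = ennreal (norm z powr (-b))"
      using True by (simp add: indicator_def)
    also have "\<dots> \<le> ennreal (c k) * indicator (A k) z" using zA le by (simp add: indicator_def ennreal_leI)
    also have "\<dots> \<le> (\<Sum>k. ennreal (c k) * indicator (A k) z)"
      using ennreal_suminf_lessD linorder_not_le by blast
    finally show ?thesis .
  qed
  have "(\<integral>\<^sup>+z. indicator (ball (0::'n) 1) z * ennreal (norm z powr (-b)) \<partial>lborel)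
     \<le> (\<integral>\<^sup>+z. (\<Sum>k. ennreal (c k) * indicator (A k) z) \<partial>lborel)"
    by (rule nn_integral_mono) (rule pw)
  also have "\<dots> = (\<Sum>k. \<integral>\<^sup>+z. ennreal (c k) * indicator (A k) z \<partial>lborel)"
    by (rule nn_integral_suminf) measurable
  also have "\<dots> = (\<Sum>k. ennreal (c k) * emeasure lborel (A k))"
    by (rule suminf_cong, rule nn_integral_cmult_indicator, rule Am)
  also have "\<dots> \<le> (\<Sum>k. ennreal (c k * (V * ((1/2)^k)^N)))"
  proof (intro suminf_le summableI)
    fix k
    have "ennreal (c k) * emeasure lborel (A k) \<le> ennreal (c k) * ennreal (V * ((1/2)^k)^N)"
      by (rule mult_left_mono[OF Ameas]) simp
    also have "\<dots> = ennreal (c k * (V * ((1/2)^k)^N))"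
      by (rule ennreal_mult[symmetric]) (auto simp: c_def V_def)
    finally show "ennreal (c k) * emeasure lborel (A k) \<le> ennreal (c k * (V * ((1/2)^k)^N))" .
  qed
  also have "\<dots> < \<infinity>"
  proof -
    have eq: "c k * (V * ((1/2)^k)^N) = 2 powr b * V * (2 powr b / 2^N)^k" for k
      unfolding c_def by (simp add: power_divide power_mult[symmetric] mult.commute power_mult_distrib)
    have r: "2 powr b / 2^N < (1::real)" 
      using bN powr_less_mono[of b "real N" 2] by (simp add: N_def powr_realpow)
    have "summable (\<lambda>k. 2 powr b * V * (2 powr b / 2^N)^k)"
      using r by (intro summable_mult summable_geometric) simp
    then have "(\<Sum>k. ennreal (c k * (V * ((1/2)^k)^N))) \<noteq> top"
      unfolding eq by (rule ennreal_suminf_neq_top) (simp add: V_def)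
    then show ?thesis by (simp add: top.not_eq_extremum)
  qed
  finally show ?thesis .
qed
lemma tail_int:
  fixes b :: real assumes bN: "real DIM('n) < b"
  shows "(\<integral>\<^sup>+z. indicator (- ball (0::'n::euclidean_space) 1) z * ennreal (norm z powr (-b)) \<partial>lborel) < \<infinity>"
proof -
  define N where "N = DIM('n)"
  define V where "V = unit_ball_vol (real N)"
  define A where "A k = {z::'n. 2^k \<le> norm z \<and> norm z < (2::real)^(Suc k)}" for k
  define c where "c k = (2 powr (-b)) ^ k" for k
  have Am[measurable]: "A k \<in> sets lborel" for k unfolding A_def by measurable
  have Ameas: "emeasure lborel (A k) \<le> ennreal (V * (2^(Suc k))^N)" for k
  proof -
    have "A k \<subseteq> cball 0 (2^(Suc k))" unfolding A_def by auto
    then have "emeasure lborel (A k) \<le> emeasure lborel (cball (0::'n) (2^(Suc k)))"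
      by (intro emeasure_mono) auto
    also have "\<dots> = ennreal (V * (2^(Suc k))^N)" unfolding V_def N_def by (rule emeasure_cball) simp
    finally show ?thesis .
  qed
  have pw: "indicator (- ball (0::'n) 1) z * ennreal (norm z powr (-b)) \<le> (\<Sum>k. ennreal (c k) * indicator (A k) z)" for z
  proof (cases "1 \<le> norm z")
    case False
    then show ?thesis by (auto simp: indicator_def)
  next
    case True
    obtain n where n: "norm z < (2::real)^n" using real_arch_pow[of 2 "norm z"] by auto
    define m where "m = (LEAST n. norm z < (2::real)^n)"
    have m1: "norm z < (2::real)^m" unfolding m_def by (rule LeastI[of _ n]) (rule n)
    have m0: "m \<noteq> 0" using m1 True by (cases m) auto
    then obtain k where mk: "m = Suc k" by (cases m) auto
    have "\<not> norm z < (2::real)^k"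
    proof
      assume "norm z < (2::real)^k"
      then have "m \<le> k" unfolding m_def by (rule Least_le)
      then show False using mk by simp
    qed
    then have zA: "z \<in> A k" using m1 mk unfolding A_def by auto
    have "norm z powr (-b) \<le> ((2::real)^k) powr (-b)"
      using zA bN unfolding A_def by (intro powr_mono2') auto
    also have "\<dots> = c k" unfolding c_def by (simp add: pow_powr)
    finally have le: "norm z powr (-b) \<le> c k" .
    have "indicator (- ball (0::'n) 1) z * ennreal (norm z powr (-b)) = ennreal (norm z powr (-b))"
      using True by (simp add: indicator_def)
    also have "\<dots> \<le> ennreal (c k) * indicator (A k) z" using zA le by (simp add: indicator_def ennreal_leI)
    also have "\<dots> \<le> (\<Sum>k. ennreal (c k) * indicator (A k) z)"
      using ennreal_suminf_lessD linorder_not_le by blast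
    finally show ?thesis .
  qed
  have "(\<integral>\<^sup>+z. indicator (- ball (0::'n) 1) z * ennreal (norm z powr (-b)) \<partial>lborel)
     \<le> (\<integral>\<^sup>+z. (\<Sum>k. ennreal (c k) * indicator (A k) z) \<partial>lborel)"
    by (rule nn_integral_mono) (rule pw)
  also have "\<dots> = (\<Sum>k. \<integral>\<^sup>+z. ennreal (c k) * indicator (A k) z \<partial>lborel)"
    by (rule nn_integral_suminf) measurable
  also have "\<dots> = (\<Sum>k. ennreal (c k) * emeasure lborel (A k))"
    by (rule suminf_cong, rule nn_integral_cmult_indicator, rule Am)
  also have "\<dots> \<le> (\<Sum>k. ennreal (c k * (V * (2^(Suc k))^N)))"
  proof (intro suminf_le summableI)
    fix k
    have "ennreal (c k) * emeasure lborel (A k) \<le> ennreal (c k) * ennreal (V * (2^(Suc k))^N)"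
      by (rule mult_left_mono[OF Ameas]) simp
    also have "\<dots> = ennreal (c k * (V * (2^(Suc k))^N))"
      by (rule ennreal_mult[symmetric]) (auto simp: c_def V_def)
    finally show "ennreal (c k) * emeasure lborel (A k) \<le> ennreal (c k * (V * (2^(Suc k))^N))" .
  qed
  also have "\<dots> < \<infinity>"
  proof -
    have eq: "c k * (V * (2^(Suc k))^N) = V * 2^N * (2 powr (-b) * 2^N)^k" for k
      unfolding c_def by (simp add: power_mult[symmetric] mult.commute power_mult_distrib mult.left_commute)
    have r: "2 powr (-b) * 2^N < (1::real)"
    proof -
      have "(2::real)^N = 2 powr (real N)" by (simp add: powr_realpow)
      then have "2 powr (-b) * 2^N = 2 powr (real N - b)" by (simp add: powr_add[symmetric])
      also have "\<dots> < 2 powr 0" using bN by (intro powr_less_mono) (auto simp: N_def)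
      finally show ?thesis by simp
    qed
    have "summable (\<lambda>k. V * 2^N * (2 powr (-b) * 2^N)^k)"
      using r by (intro summable_mult summable_geometric) simp
    then have "(\<Sum>k. ennreal (c k * (V * (2^(Suc k))^N))) \<noteq> top"
      unfolding eq by (rule ennreal_suminf_neq_top) (simp add: V_def)
    then show ?thesis by (simp add: top.not_eq_extremum)
  qed
  finally show ?thesis .
qed


definition tent :: "'n::euclidean_space \<Rightarrow> real" where "tent x = max 0 (1 - norm x)"

lemma tent_meas[measurable]: "tent \<in> borel_measurable borel"
  unfolding tent_def by measurable

lemma tent_bounds: "0 \<le> tent x" "tent x \<le> 1" "norm x \<ge> 1 \<Longrightarrow> tent x = 0"
  by (auto simp: tent_def)

lemma tent_lip: "\<bar>tent x - tent y\<bar> \<le> norm (x - y)"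
proof -
  have "\<bar>norm x - norm y\<bar> \<le> norm (x - y)" by (rule norm_triangle_ineq3)
  then show ?thesis unfolding tent_def by (auto simp: max_def)
qed

lemma tent_sq: "(tent x - tent y)\<^sup>2 \<le> min ((norm (x - y))\<^sup>2) 1"
proof -
  have a: "\<bar>tent x - tent y\<bar> \<le> norm (x - y)" by (rule tent_lip)
  have b: "\<bar>tent x - tent y\<bar> \<le> 1" using tent_bounds[of x] tent_bounds[of y] by auto
  have "(tent x - tent y)\<^sup>2 = \<bar>tent x - tent y\<bar>\<^sup>2" by simp
  moreover have "\<bar>tent x - tent y\<bar>\<^sup>2 \<le> (norm (x - y))\<^sup>2" using a by (intro power_mono) auto
  moreover have "\<bar>tent x - tent y\<bar>\<^sup>2 \<le> 1\<^sup>2" using b by (intro power_mono) auto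
  ultimately show ?thesis by simp
qed

lemma translate_int:
  fixes g :: "'n::euclidean_space \<Rightarrow> ennreal"
  assumes [measurable]: "g \<in> borel_measurable borel"
  shows "(\<integral>\<^sup>+y. g (x - y) \<partial>lborel) = (\<integral>\<^sup>+z. g z \<partial>lborel)"
proof -
  have eq: "distr lborel borel (\<lambda>z. x - z) = (lborel :: 'n measure)"
    using lborel_affine[of "-1" x] by (simp add: density_1)
  have "(\<integral>\<^sup>+y. g (x - y) \<partial>lborel) = (\<integral>\<^sup>+y. g (x - y) \<partial>(distr lborel borel (\<lambda>z. x - z)))"
    by (simp add: eq)
  also have "\<dots> = (\<integral>\<^sup>+z. g (x - (x - z)) \<partial>lborel)"
    by (subst nn_integral_distr) auto
  finally show ?thesis by simp
qed


lemma kernel_bound: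
  fixes s :: real and z :: "'n::euclidean_space"
  assumes s0: "0 < s" and s1: "s < 1" and d: "d\<^sup>2 \<le> min ((norm z)\<^sup>2) 1"
  shows "ennreal (d\<^sup>2 / norm z powr (real DIM('n) + 2 * s))
     \<le> indicator (ball 0 1) z * ennreal (norm z powr (-(real DIM('n) + s - 1)))
       + indicator (- ball 0 1) z * ennreal (norm z powr (-(real DIM('n) + 2 * s)))"
proof -
  define a where "a = real DIM('n) + 2 * s"
  define r where "r = norm z"
  have r0: "0 \<le> r" unfolding r_def by simp
  show ?thesis
  proof (cases "r = 0")
    case True
    then show ?thesis by (simp add: r_def)
  next
    case False
    then have rp: "0 < r" using r0 by simp
    have pa: "0 < r powr a" using rp by simp
    show ?thesis
    proof (cases "r < 1")
      case True
      have "d\<^sup>2 / r powr a \<le> r\<^sup>2 / r powr a"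
        using d pa by (intro divide_right_mono) (auto simp: r_def)
      also have "r\<^sup>2 = r powr 2" using rp by (simp add: powr_realpow)
      also have "r powr 2 \<le> r powr (s + 1)" using True rp s1 s0 by (intro powr_mono') auto
      also have "r powr (s + 1) / r powr a = r powr (-(real DIM('n) + s - 1))"
        using rp by (simp add: a_def powr_diff[symmetric] algebra_simps)
      finally have le: "d\<^sup>2 / r powr a \<le> r powr (-(real DIM('n) + s - 1))" using pa by (simp add: divide_right_mono)
      show ?thesis using True le by (simp add: r_def a_def indicator_def ennreal_leI)
    next
      case False
      have "d\<^sup>2 / r powr a \<le> 1 / r powr a"
        using d pa by (intro divide_right_mono) auto
      also have "\<dots> = r powr (-a)" by (simp add: powr_minus_divide)
      finally have le: "d\<^sup>2 / r powr a \<le> r powr (-a)" .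
      show ?thesis using False le by (simp add: r_def a_def indicator_def ennreal_leI)
    qed
  qed
qed

lemma tent_gag:
  fixes s :: real assumes s0: "0 < s" and s1: "s < 1"
  shows "gagliardo s (tent :: 'n::euclidean_space \<Rightarrow> real) < \<infinity>"
proof -
  define N where "N = real DIM('n)"
  define a where "a = N + 2 * s"
  define kb where "kb z = indicator (ball 0 1) z * ennreal (norm z powr (-(N + s - 1)))
       + indicator (- ball 0 1) z * ennreal (norm z powr (-a))" for z :: 'n
  have N1: "1 \<le> N" unfolding N_def by simp
  have bm[measurable]: "ball (0::'n) 1 \<in> sets borel" "ball (0::'n) 2 \<in> sets borel" by auto
  have kbm[measurable]: "kb \<in> borel_measurable borel" unfolding kb_def by measurable
  define K where "K = (\<integral>\<^sup>+z. kb z \<partial>lborel)"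
  have K: "K < \<infinity>"
  proof -
    have "K = (\<integral>\<^sup>+z. indicator (ball (0::'n) 1) z * ennreal (norm z powr (-(N + s - 1))) \<partial>lborel)
       + (\<integral>\<^sup>+z. indicator (- ball (0::'n) 1) z * ennreal (norm z powr (-a)) \<partial>lborel)"
      unfolding K_def kb_def by (rule nn_integral_add) measurable
    moreover have "(\<integral>\<^sup>+z. indicator (ball (0::'n) 1) z * ennreal (norm z powr (-(N + s - 1))) \<partial>lborel) < \<infinity>"
    proof -
      have "0 \<le> N + s - 1" "N + s - 1 < real DIM('n)" using N1 s0 s1 unfolding N_def by linarith+
      from near_int[OF this] show ?thesis .
    qed
    moreover have "(\<integral>\<^sup>+z. indicator (- ball (0::'n) 1) z * ennreal (norm z powr (-a)) \<partial>lborel) < \<infinity>"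
      using tail_int[of a, where 'n='n] s0 by (simp add: N_def a_def)
    ultimately show ?thesis by (simp add: ennreal_add_less_top)
  qed
  define mB where "mB = emeasure lborel (ball (0::'n) 1)"
  have mB: "mB < \<infinity>" unfolding mB_def by (rule emeasure_lborel_ball_finite)
  have inner1: "(\<integral>\<^sup>+y. ennreal ((tent x - tent y)\<^sup>2 / norm (x - y) powr a) \<partial>lborel) \<le> K" for x :: 'n
  proof -
    have "(\<integral>\<^sup>+y. ennreal ((tent x - tent y)\<^sup>2 / norm (x - y) powr a) \<partial>lborel) \<le> (\<integral>\<^sup>+y. kb (x - y) \<partial>lborel)"
      by (rule nn_integral_mono) (unfold kb_def a_def N_def, rule kernel_bound[OF s0 s1 tent_sq])
    also have "\<dots> = K" unfolding K_def by (rule translate_int) (rule kbm)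
    finally show ?thesis .
  qed
  have inner2: "(\<integral>\<^sup>+y. ennreal ((tent x - tent y)\<^sup>2 / norm (x - y) powr a) \<partial>lborel)
       \<le> ennreal (2 powr a * norm x powr (-a)) * mB" if x2: "2 \<le> norm x" for x :: 'n
  proof -
    have tx: "tent x = 0" using x2 by (intro tent_bounds(3)) simp
    have a0: "0 < a" using N1 s0 by (simp add: a_def)
    have pw: "ennreal ((tent x - tent y)\<^sup>2 / norm (x - y) powr a)
       \<le> ennreal (2 powr a * norm x powr (-a)) * indicator (ball 0 1) y" for y
    proof (cases "norm y < 1")
      case False
      then show ?thesis using tx tent_bounds(3)[of y] by simp
    next
      case True
      have ty: "(tent y)\<^sup>2 \<le> 1" using tent_bounds[of y] by (simp add: power_le_one)
      have "norm x - norm y \<le> norm (x - y)" by (rule norm_triangle_ineq2)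
      then have r: "norm x / 2 \<le> norm (x - y)" using True x2 by simp
      have xp: "0 < norm x / 2" using x2 using x2 by (cases "x = 0") auto
      have "(norm x / 2) powr a \<le> norm (x - y) powr a" using r xp a0 by (intro powr_mono2) auto
      then have rp: "norm x powr a / 2 powr a \<le> norm (x - y) powr a" by (simp add: powr_divide)
      have p1: "0 < norm x powr a / 2 powr a" using xp by simp
      have "(tent x - tent y)\<^sup>2 / norm (x - y) powr a \<le> 1 / (norm x powr a / 2 powr a)"
        using tx ty rp p1 by (intro frac_le) auto
      also have "\<dots> = 2 powr a * norm x powr (-a)" by (simp add: powr_minus_divide)
      finally show ?thesis using True by (simp add: ennreal_leI)
    qed
    have "(\<integral>\<^sup>+y. ennreal ((tent x - tent y)\<^sup>2 / norm (x - y) powr a) \<partial>lborel)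
        \<le> (\<integral>\<^sup>+y. ennreal (2 powr a * norm x powr (-a)) * indicator (ball (0::'n) 1) y \<partial>lborel)"
      by (rule nn_integral_mono) (rule pw)
    also have "\<dots> = ennreal (2 powr a * norm x powr (-a)) * mB"
      unfolding mB_def by (rule nn_integral_cmult_indicator) simp
    finally show ?thesis .
  qed
  define G where "G x = K * indicator (ball 0 2) x + ennreal (2 powr a) * mB *
       (indicator (- ball 0 1) x * ennreal (norm x powr (-a)))" for x :: 'n
  have "gagliardo s (tent :: 'n \<Rightarrow> real) \<le> (\<integral>\<^sup>+x. G x \<partial>lborel)"
    unfolding gagliardo_def
  proof (rule nn_integral_mono)
    fix x :: 'n
    have eqa: "real DIM('n) + 2 * s = a" by (simp add: a_def N_def)
    show "(\<integral>\<^sup>+y. ennreal ((tent x - tent y)\<^sup>2 / norm (x - y) powr (real DIM('n) + 2 * s)) \<partial>lborel) \<le> G x"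
      unfolding eqa
    proof (cases "norm x < 2")
      case True
      then show "(\<integral>\<^sup>+y. ennreal ((tent x - tent y)\<^sup>2 / norm (x - y) powr a) \<partial>lborel) \<le> G x"
        using inner1[of x] unfolding G_def by (auto simp: indicator_def intro: order_trans add_increasing2)
    next
      case False
      then have "(\<integral>\<^sup>+y. ennreal ((tent x - tent y)\<^sup>2 / norm (x - y) powr a) \<partial>lborel)
          \<le> ennreal (2 powr a * norm x powr (-a)) * mB" using inner2[of x] by simp
      also have "\<dots> = ennreal (2 powr a) * mB * (indicator (- ball 0 1) x * ennreal (norm x powr (-a)))"
        using False by (simp add: indicator_def ennreal_mult mult_ac)
      also have "\<dots> \<le> G x" unfolding G_def by (rule add_increasing) auto
      finally show "(\<integral>\<^sup>+y. ennreal ((tent x - tent y)\<^sup>2 / norm (x - y) powr a) \<partial>lborel) \<le> G x" .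
    qed
  qed
  also have "(\<integral>\<^sup>+x. G x \<partial>lborel) = K * emeasure lborel (ball (0::'n) 2)
      + ennreal (2 powr a) * mB * (\<integral>\<^sup>+x. indicator (- ball (0::'n) 1) x * ennreal (norm x powr (-a)) \<partial>lborel)"
    unfolding G_def
    by (subst nn_integral_add) (auto simp: nn_integral_cmult_indicator nn_integral_cmult)
  also have "\<dots> < \<infinity>"
  proof -
    have t: "(\<integral>\<^sup>+x. indicator (- ball (0::'n) 1) x * ennreal (norm x powr (-a)) \<partial>lborel) < \<infinity>"
      using tail_int[of a, where 'n='n] s0 by (simp add: N_def a_def)
    have b2: "emeasure lborel (ball (0::'n) 2) < \<infinity>" by (rule emeasure_lborel_ball_finite)
    show ?thesis using K mB t b2 by (simp add: ennreal_add_less_top ennreal_mult_less_top)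
  qed
  finally show ?thesis .
qed


lemma L2_scale:
  assumes [measurable]: "u \<in> borel_measurable borel"
  shows "L2_sq (\<lambda>x. c * u x) = ennreal (c\<^sup>2) * L2_sq u"
proof -
  have "L2_sq (\<lambda>x. c * u x) = (\<integral>\<^sup>+ x. ennreal (c\<^sup>2) * ennreal ((u x)\<^sup>2) \<partial>lborel)"
    unfolding L2_sq_def by (intro nn_integral_cong) (simp add: ennreal_mult[symmetric] power_mult_distrib)
  also have "\<dots> = ennreal (c\<^sup>2) * L2_sq u"
    unfolding L2_sq_def by (rule nn_integral_cmult) measurable
  finally show ?thesis .
qed

lemma gag_scale:
  assumes [measurable]: "u \<in> borel_measurable borel"
  shows "gagliardo s (\<lambda>x. c * u x) = ennreal (c\<^sup>2) * gagliardo s u"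
proof -
  define r where "r = real DIM('a) + 2 * s"
  have inner: "(\<integral>\<^sup>+ y. ennreal ((c * u x - c * u y)\<^sup>2 / norm (x - y) powr r) \<partial>lborel)
     = ennreal (c\<^sup>2) * (\<integral>\<^sup>+ y. ennreal ((u x - u y)\<^sup>2 / norm (x - y) powr r) \<partial>lborel)" for x :: 'a
  proof -
    have "(\<integral>\<^sup>+ y. ennreal ((c * u x - c * u y)\<^sup>2 / norm (x - y) powr r) \<partial>lborel)
       = (\<integral>\<^sup>+ y. ennreal (c\<^sup>2) * ennreal ((u x - u y)\<^sup>2 / norm (x - y) powr r) \<partial>lborel)"
      by (intro nn_integral_cong) (simp add: ennreal_mult[symmetric] power_mult_distrib right_diff_distrib[symmetric])
    also have "\<dots> = ennreal (c\<^sup>2) * (\<integral>\<^sup>+ y. ennreal ((u x - u y)\<^sup>2 / norm (x - y) powr r) \<partial>lborel)"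
      by (rule nn_integral_cmult) measurable
    finally show ?thesis .
  qed
  have "gagliardo s (\<lambda>x. c * u x) = (\<integral>\<^sup>+ x. ennreal (c\<^sup>2) * (\<integral>\<^sup>+ y. ennreal ((u x - u y)\<^sup>2 / norm (x - y) powr r) \<partial>lborel) \<partial>lborel)"
    unfolding gagliardo_def r_def[symmetric] by (simp add: inner)
  also have "\<dots> = ennreal (c\<^sup>2) * gagliardo s u"
    unfolding gagliardo_def r_def[symmetric] by (rule nn_integral_cmult) measurable
  finally show ?thesis .
qed

lemma Hs_scale:
  fixes u :: "'n::euclidean_space \<Rightarrow> real"
  assumes "in_Hs s u"
  shows "in_Hs s (\<lambda>x. c * u x)" "Hs_norm s (\<lambda>x. c * u x) = \<bar>c\<bar> * Hs_norm s u"
proof -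
  have m[measurable]: "u \<in> borel_measurable borel" using assms unfolding in_Hs_def by simp
  have L: "L2_sq u < \<infinity>" and G: "gagliardo s u < \<infinity>" using assms unfolding in_Hs_def by auto
  show "in_Hs s (\<lambda>x. c * u x)" unfolding in_Hs_def L2_scale[OF m] gag_scale[OF m]
    using L G by (auto simp: ennreal_mult_less_top)
  have "Hs_norm s (\<lambda>x. c * u x) = sqrt (c\<^sup>2 * (enn2real (L2_sq u) + enn2real (gagliardo s u)))"
    unfolding Hs_norm_def L2_scale[OF m] gag_scale[OF m] by (simp add: enn2real_mult distrib_left)
  also have "\<dots> = \<bar>c\<bar> * Hs_norm s u" unfolding Hs_norm_def by (simp add: real_sqrt_mult)
  finally show "Hs_norm s (\<lambda>x. c * u x) = \<bar>c\<bar> * Hs_norm s u" .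
qed

lemma Lp_int_scale:
  fixes u :: "'n::euclidean_space \<Rightarrow> real"
  assumes [measurable]: "u \<in> borel_measurable borel"
  shows "(\<integral>\<^sup>+ x. ennreal (\<bar>c * u x\<bar> powr q) \<partial>lborel) = ennreal (\<bar>c\<bar> powr q) * (\<integral>\<^sup>+ x. ennreal (\<bar>u x\<bar> powr q) \<partial>lborel)"
proof -
  have "(\<integral>\<^sup>+ x. ennreal (\<bar>c * u x\<bar> powr q) \<partial>lborel) = (\<integral>\<^sup>+ x. ennreal (\<bar>c\<bar> powr q) * ennreal (\<bar>u x\<bar> powr q) \<partial>lborel)"
    by (intro nn_integral_cong) (simp add: ennreal_mult[symmetric] abs_mult powr_mult)
  also have "\<dots> = ennreal (\<bar>c\<bar> powr q) * (\<integral>\<^sup>+ x. ennreal (\<bar>u x\<bar> powr q) \<partial>lborel)"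
    by (rule nn_integral_cmult) measurable
  finally show ?thesis .
qed


lemma tent_Hs:
  assumes "0 < s" "s < 1"
  shows "in_Hs s (tent :: 'n::euclidean_space \<Rightarrow> real)"
proof -
  have "L2_sq (tent :: 'n \<Rightarrow> real) \<le> (\<integral>\<^sup>+ x. indicator (cball (0::'n) 1) x \<partial>lborel)"
    unfolding L2_sq_def
  proof (rule nn_integral_mono)
    fix x :: 'n
    show "ennreal ((tent x)\<^sup>2) \<le> indicator (cball 0 1) x"
      using tent_bounds[of x] by (auto simp: indicator_def power_le_one)
  qed
  also have "\<dots> = emeasure lborel (cball (0::'n) 1)" by simp
  also have "\<dots> < \<infinity>" by (rule emeasure_lborel_cball_finite)
  finally show ?thesis unfolding in_Hs_def using tent_gag[OF assms, where 'n='n] by simp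
qed

lemma tent_Lp:
  assumes q: "0 < q"
  shows "0 < (\<integral>\<^sup>+ x. ennreal (\<bar>(tent::'n::euclidean_space \<Rightarrow> real) x\<bar> powr q) \<partial>lborel)"
        "(\<integral>\<^sup>+ x. ennreal (\<bar>(tent::'n \<Rightarrow> real) x\<bar> powr q) \<partial>lborel) < \<infinity>"
proof -
  have "(\<integral>\<^sup>+ x. ennreal (\<bar>(tent::'n \<Rightarrow> real) x\<bar> powr q) \<partial>lborel) \<le> (\<integral>\<^sup>+ x. indicator (cball (0::'n) 1) x \<partial>lborel)"
  proof (rule nn_integral_mono)
    fix x :: 'n
    show "ennreal (\<bar>tent x\<bar> powr q) \<le> indicator (cball 0 1) x"
    proof (cases "norm x \<le> 1")
      case True
      have "\<bar>tent x\<bar> powr q \<le> 1" using tent_bounds[of x] q powr_mono2[of q "tent x" 1] by simp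
      then show ?thesis using True by (simp add: indicator_def)
    next
      case False
      then show ?thesis using tent_bounds(3)[of x] by (simp add: indicator_def)
    qed
  qed
  also have "\<dots> = emeasure lborel (cball (0::'n) 1)" by simp
  also have "\<dots> < \<infinity>" by (rule emeasure_lborel_cball_finite)
  finally show "(\<integral>\<^sup>+ x. ennreal (\<bar>(tent::'n \<Rightarrow> real) x\<bar> powr q) \<partial>lborel) < \<infinity>" .
  have "0 < ennreal ((1/2) powr q * (unit_ball_vol (real DIM('n)) * (1/2)^DIM('n)))"
    by simp
  also have "\<dots> = ennreal ((1/2) powr q) * emeasure lborel (cball (0::'n) (1/2))"
    by (subst emeasure_cball) (auto simp: ennreal_mult)
  also have "\<dots> = (\<integral>\<^sup>+ x. ennreal ((1/2) powr q) * indicator (cball (0::'n) (1/2)) x \<partial>lborel)"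
    by (rule nn_integral_cmult_indicator[symmetric]) simp
  also have "\<dots> \<le> (\<integral>\<^sup>+ x. ennreal (\<bar>(tent::'n \<Rightarrow> real) x\<bar> powr q) \<partial>lborel)"
  proof (rule nn_integral_mono)
    fix x :: 'n
    show "ennreal ((1/2) powr q) * indicator (cball 0 (1/2)) x \<le> ennreal (\<bar>tent x\<bar> powr q)"
    proof (cases "norm x \<le> 1/2")
      case True
      have "1/2 \<le> \<bar>tent x\<bar>" using True by (simp add: tent_def)
      then have "(1/2) powr q \<le> \<bar>tent x\<bar> powr q" using q by (intro powr_mono2) auto
      then show ?thesis using True by (simp add: indicator_def ennreal_leI)
    next
      case False
      then show ?thesis by (simp add: indicator_def)
    qed
  qed
  finally show "0 < (\<integral>\<^sup>+ x. ennreal (\<bar>(tent::'n \<Rightarrow> real) x\<bar> powr q) \<partial>lborel)" .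
qed

lemma witness:
  fixes p s :: real assumes s0: "0 < s" and s1: "s < 1" and p: "1 < p"
  shows "\<exists>w::'n::euclidean_space \<Rightarrow> real. in_Hs s w \<and> Lp_norm (p + 1) w = 1"
proof -
  define I where "I = (\<integral>\<^sup>+ x. ennreal (\<bar>(tent::'n \<Rightarrow> real) x\<bar> powr (p + 1)) \<partial>lborel)"
  have I0: "0 < I" and It: "I < \<infinity>" using tent_Lp[of "p + 1", where 'n='n] p unfolding I_def by auto
  define i where "i = enn2real I"
  have ip: "0 < i" using I0 It unfolding i_def by (simp add: enn2real_positive_iff)
  have Ii: "I = ennreal i" using It unfolding i_def by simp
  define c where "c = i powr (- 1 / (p + 1))"
  have cp: "0 < c" using ip unfolding c_def by simp
  define w where "w = (\<lambda>x. c * (tent::'n \<Rightarrow> real) x)"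
  have "in_Hs s w" unfolding w_def by (rule Hs_scale(1)[OF tent_Hs[OF s0 s1]])
  moreover have "Lp_norm (p + 1) w = 1"
  proof -
    have "(\<integral>\<^sup>+ x. ennreal (\<bar>w x\<bar> powr (p + 1)) \<partial>lborel) = ennreal (\<bar>c\<bar> powr (p + 1)) * I"
      unfolding w_def I_def by (rule Lp_int_scale) measurable
    also have "\<bar>c\<bar> powr (p + 1) = i powr (-1)" using cp p unfolding c_def by (simp add: powr_powr)
    finally have "enn2real (\<integral>\<^sup>+ x. ennreal (\<bar>w x\<bar> powr (p + 1)) \<partial>lborel) = i powr (-1) * i"
      using ip by (simp add: Ii enn2real_mult)
    also have "\<dots> = 1" using ip by (simp add: powr_minus)
    finally show ?thesis unfolding Lp_norm_def by simp
  qed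
  ultimately show ?thesis by blast
qed


lemma Lp1_int:
  fixes u :: "'n::euclidean_space \<Rightarrow> real"
  assumes "Lp_norm q u = 1" "0 < q"
  shows "enn2real (\<integral>\<^sup>+ x. ennreal (\<bar>u x\<bar> powr q) \<partial>lborel) = 1"
proof -
  define J where "J = enn2real (\<integral>\<^sup>+ x. ennreal (\<bar>u x\<bar> powr q) \<partial>lborel)"
  have J0: "0 \<le> J" unfolding J_def by simp
  have e: "J powr (1 / q) = 1" using assms(1) unfolding Lp_norm_def J_def .
  then have "J \<noteq> 0" by auto
  then have "J = (J powr (1 / q)) powr q" using J0 assms(2) by (simp add: powr_powr)
  then show ?thesis using e unfolding J_def by simp
qed

lemma Hs_nonzero:
  fixes u :: "'n::euclidean_space \<Rightarrow> real"
  assumes "in_Hs s u" "Lp_norm q u = 1" "0 < q"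
  shows "Hs_norm s u \<noteq> 0"
proof
  assume H: "Hs_norm s u = 0"
  have m[measurable]: "u \<in> borel_measurable borel" and L: "L2_sq u < \<infinity>"
    using assms(1) unfolding in_Hs_def by auto
  have "enn2real (L2_sq u) + enn2real (gagliardo s u) = 0" using H unfolding Hs_norm_def by simp
  then have "enn2real (L2_sq u) = 0" by (metis add_nonneg_eq_0_iff enn2real_nonneg)
  then have "L2_sq u = 0" using L by (auto simp: enn2real_eq_0_iff)
  then have "AE x in lborel. ennreal ((u x)\<^sup>2) = 0" unfolding L2_sq_def
    by (subst (asm) nn_integral_0_iff_AE) auto
  then have "AE x in lborel. ennreal (\<bar>u x\<bar> powr q) = 0" by eventually_elim simp
  then have "(\<integral>\<^sup>+ x. ennreal (\<bar>u x\<bar> powr q) \<partial>lborel) = 0"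
    by (subst nn_integral_0_iff_AE) auto
  then show False using Lp1_int[OF assms(2,3)] by simp
qed


theorem lemma3p5:
  fixes s p :: real and a :: "'n::euclidean_space \<Rightarrow> real" and f :: "('n \<Rightarrow> real) \<Rightarrow> real"
  assumes "0 < s" "s < 1"
    and "real DIM('n) > 2 * s"
    and "1 < p" "p < (real DIM('n) + 2 * s) / (real DIM('n) - 2 * s)"
    and "a \<in> borel_measurable lborel" "AE x in lborel. a x > 0"
    and "esssup lborel (\<lambda>x. ereal \<bar>a x\<bar>) < \<infinity>"
    and "in_Hminus s f"
    and "Hminus_norm s f < (p * Linf_norm a) powr (- 1 / (p - 1)) * (p - 1) / p
                             * S1 s p TYPE('n) powr ((p + 1) / (2 * (p - 1)))"
  shows "(INF u \<in> {u. in_Hs s u \<and> Lp_norm (p + 1) u = 1}.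
            (p * Linf_norm a) powr (- 1 / (p - 1)) * (p - 1) / p * Hs_norm s u powr (2 * p / (p - 1)) - f u) > 0"
proof -
  note s0 = assms(1) and s1 = assms(2) and p1 = assms(4) and fH = assms(9)
  define C where "C = (p * Linf_norm a) powr (- 1 / (p - 1)) * (p - 1) / p"
  define F where "F = Hminus_norm s f"
  define q where "q = 2 * p / (p - 1)"
  define e where "e = (p + 1) / (2 * (p - 1))"
  define S where "S = S1 s p TYPE('n)"
  define Set where "Set = {u::'n \<Rightarrow> real. in_Hs s u \<and> Lp_norm (p + 1) u = 1}"
  have hyp: "F < C * S powr e" using assms(10) unfolding F_def C_def S_def e_def .
  have qp: "0 < p + 1" using p1 by simp
  obtain w :: "'n \<Rightarrow> real" where w: "in_Hs s w" "Lp_norm (p + 1) w = 1" using witness[OF s0 s1 p1, where 'n='n] by blast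
  have wS: "w \<in> Set" using w unfolding Set_def by simp
  define SS where "SS = {u :: 'n \<Rightarrow> real. in_Hs s u \<and> Hs_norm s u \<noteq> 0}"
  define g where "g u = (Hs_norm s u)\<^sup>2 / (enn2real (\<integral>\<^sup>+ x. ennreal (\<bar>u x\<bar> powr (p + 1)) \<partial>lborel)) powr (2 / (p + 1))" for u :: "'n \<Rightarrow> real"
  have Sdef: "S = (INF u \<in> SS. g u)" unfolding S_def S1_def SS_def g_def by simp
  have g0: "0 \<le> g u" for u unfolding g_def by simp
  have bddg: "bdd_below (g ` SS)" using g0 by (intro bdd_belowI[of _ 0]) auto
  have inSS: "u \<in> Set \<Longrightarrow> u \<in> SS" for u
    unfolding Set_def SS_def using Hs_nonzero[OF _ _ qp] by auto
  have gS: "g u = (Hs_norm s u)\<^sup>2" if uS: "u \<in> Set" for u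
  proof -
    have "enn2real (\<integral>\<^sup>+ x. ennreal (\<bar>u x\<bar> powr (p + 1)) \<partial>lborel) = 1"
      using uS unfolding Set_def by (intro Lp1_int[OF _ qp]) simp
    then show ?thesis unfolding g_def by simp
  qed
  have SleH: "u \<in> Set \<Longrightarrow> S \<le> (Hs_norm s u)\<^sup>2" for u
    using cINF_lower[OF bddg inSS] gS Sdef by metis
  have S0: "0 \<le> S" unfolding Sdef
    using inSS[OF wS] g0 by (intro cINF_greatest) auto
  obtain C0 where C0: "\<And>u. in_Hs s u \<Longrightarrow> \<bar>f u\<bar> \<le> C0 * Hs_norm s u"
    using fH unfolding in_Hminus_def by blast
  have fhom: "\<And>c u. in_Hs s u \<Longrightarrow> f (\<lambda>x. c * u x) = c * f u" using fH unfolding in_Hminus_def by blast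
  define B where "B = {u :: 'n \<Rightarrow> real. in_Hs s u \<and> Hs_norm s u \<le> 1}"
  have bddF: "bdd_above ((\<lambda>u. \<bar>f u\<bar>) ` B)"
  proof (rule bdd_aboveI)
    fix y assume "y \<in> (\<lambda>u. \<bar>f u\<bar>) ` B"
    then obtain u where u: "u \<in> B" "y = \<bar>f u\<bar>" by auto
    have "\<bar>f u\<bar> \<le> C0 * Hs_norm s u" using u C0 unfolding B_def by auto
    also have "\<dots> \<le> max C0 0"
    proof -
      have h: "0 \<le> Hs_norm s u" "Hs_norm s u \<le> 1" using u unfolding B_def Hs_norm_def by auto
      show ?thesis using h by (cases "C0 \<ge> 0") (auto intro: mult_left_le simp: mult_nonpos_nonneg)
    qed
    finally show "y \<le> max C0 0" using u by simp
  qed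
  have Fdef: "F = (SUP u \<in> B. \<bar>f u\<bar>)" unfolding F_def Hminus_norm_def B_def by simp
  have fle: "\<bar>f u\<bar> \<le> F * Hs_norm s u" if u: "in_Hs s u" "0 < Hs_norm s u" for u
  proof -
    define t where "t = Hs_norm s u"
    define v where "v = (\<lambda>x. (1 / t) * u x)"
    have vB: "v \<in> B" unfolding B_def v_def using Hs_scale[OF u(1), of "1/t"] u(2) by (simp add: t_def)
    have "\<bar>f v\<bar> \<le> F" unfolding Fdef by (rule cSUP_upper[OF vB bddF])
    moreover have "f v = f u / t" unfolding v_def using fhom[OF u(1), of "1/t"] by simp
    ultimately have "\<bar>f u\<bar> / t \<le> F" using u(2) by (simp add: t_def)
    then show ?thesis using u(2) by (simp add: t_def pos_divide_le_eq mult.commute)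
  qed
  have wge: "0 \<le> Hs_norm s w" unfolding Hs_norm_def by simp
  have wpos: "0 < Hs_norm s w" using Hs_nonzero[OF w qp] wge by linarith
  have F0: "0 \<le> F" using fle[OF w(1) wpos] wpos
    by (meson abs_ge_zero order_trans zero_le_mult_iff not_le)
  have C0': "0 \<le> C" unfolding C_def using p1 by simp
  have CSpos: "0 < C * S powr e" using F0 hyp by simp
  have Sp: "0 < S" using CSpos S0 by (cases "S = 0") auto
  have Cp: "0 < C" using CSpos C0' by (cases "C = 0") auto
  define t0 where "t0 = sqrt S"
  have t0p: "0 < t0" unfolding t0_def using Sp by simp
  have q1: "1 < q" unfolding q_def using p1 by (simp add: field_simps)
  have t0e: "t0 powr (q - 1) = S powr e"
  proof -
    have "t0 powr (q - 1) = (S powr (1/2)) powr (q - 1)" unfolding t0_def using Sp by (simp add: powr_half_sqrt)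
    also have "\<dots> = S powr ((q - 1) / 2)" by (simp add: powr_powr)
    also have "(q - 1) / 2 = e" unfolding q_def e_def using p1 by (simp add: field_simps)
    finally show ?thesis .
  qed
  define \<delta> where "\<delta> = C * t0 powr q - F * t0"
  have t0q: "t0 powr q = t0 * t0 powr (q - 1)" using t0p by (simp add: powr_diff)
  have dpos: "0 < \<delta>" unfolding \<delta>_def t0q t0e using hyp t0p
    by (simp add: algebra_simps)
  have key: "\<delta> \<le> C * Hs_norm s u powr q - f u" if uS: "u \<in> Set" for u
  proof -
    define t where "t = Hs_norm s u"
    have uH: "in_Hs s u" using uS unfolding Set_def by simp
    have "S \<le> t\<^sup>2" using SleH[OF uS] unfolding t_def .
    moreover have t0': "0 \<le> t" unfolding t_def Hs_norm_def by simp
    ultimately have tt0: "t0 \<le> t" unfolding t0_def using real_sqrt_le_mono by fastforce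
    have tp: "0 < t" using tt0 t0p by simp
    have fu: "f u \<le> F * t" using fle[OF uH] tp unfolding t_def by fastforce
    have tq: "t powr q = t * t powr (q - 1)" using tp by (simp add: powr_diff)
    have m: "t0 powr (q - 1) \<le> t powr (q - 1)" using tt0 t0p q1 by (intro powr_mono2) auto
    have "C * t powr q - F * t - \<delta> = C * (t * t powr (q - 1) - t0 * t0 powr (q - 1)) - F * (t - t0)"
      unfolding \<delta>_def tq t0q by (simp add: algebra_simps)
    also have "\<dots> \<ge> C * (t * t0 powr (q - 1) - t0 * t0 powr (q - 1)) - F * (t - t0)"
      using m Cp tp by (intro diff_right_mono mult_left_mono) auto
    also have "C * (t * t0 powr (q - 1) - t0 * t0 powr (q - 1)) - F * (t - t0) = (C * S powr e - F) * (t - t0)"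
      unfolding t0e by (simp add: algebra_simps)
    also have "\<dots> \<ge> 0" using hyp tt0 by simp
    finally have "\<delta> \<le> C * t powr q - F * t" by simp
    then show ?thesis using fu unfolding t_def by simp
  qed
  have "\<delta> \<le> (INF u \<in> Set. C * Hs_norm s u powr q - f u)"
    using wS key by (intro cINF_greatest) auto
  then show ?thesis using dpos unfolding Set_def C_def q_def by simp
qed

end
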